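(* Let $m\in\{2,3,\dots\}\cup\{\infty\}$, $\gamma\in(0,1)$, and let $T_n$ be uniformly distributed on $\mathsf{T}^{(m)}_n$. Let $A^\gamma_n$ be the set of trees $t\in\mathsf{T}^{(m)}_n$ having at least one vertex $v$ such that at least two of the subtrees rooted at children of $v$ are equal (as unordered rooted trees) and have at least $n^\gamma$ vertices. Then $\mathbb{P}(T_n\in A^\gamma_n)=O(\rho_m^{-n^\gamma}n^{5/2})$ as $n\to\infty$.
   Context: $\mathsf{T}^{(m)}_n$ is the set of rooted unordered trees with $n$ vertices in which every vertex has at most $m$ children. By Otter's theorem, $\#\mathsf{T}^{(m)}_n\sim\kappa_m\rho_m^nn^{-3/2}$ for constants $\kappa_m>0$, $\rho_m>1$. *)

theory Defs
  imports Complex_Main "HOL-Library.Multiset" "HOL-Library.Extended_Nat" "HOL-Library.Landau_Symbols"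
begin

text \<open>Rooted unordered trees: a vertex is given by the multiset of the subtrees
rooted at its children. Equality of values is equality as unordered rooted trees.\<close>
datatype utree = Node "utree multiset"

primrec nverts :: "utree \<Rightarrow> nat" where
  "nverts (Node M) = Suc (sum_mset (image_mset nverts M))"

primrec outdeg_le :: "enat \<Rightarrow> utree \<Rightarrow> bool" where
  "outdeg_le m (Node M) = (enat (size M) \<le> m \<and> (\<forall>b \<in># image_mset (outdeg_le m) M. b))"

primrec subtrees :: "utree \<Rightarrow> utree set" where
  "subtrees (Node M) = insert (Node M) (\<Union> (set_mset (image_mset subtrees M)))"

definition trees :: "enat \<Rightarrow> nat \<Rightarrow> utree set" where
  "trees m n = {t. outdeg_le m t \<and> nverts t = n}"

definition twin_branch :: "real \<Rightarrow> nat \<Rightarrow> utree \<Rightarrow> bool" where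
  "twin_branch \<gamma> n t = (\<exists>M s. Node M \<in> subtrees t \<and> count M s \<ge> 2 \<and> real (nverts s) \<ge> real n powr \<gamma>)"

definition A_set :: "enat \<Rightarrow> real \<Rightarrow> nat \<Rightarrow> utree set" where
  "A_set m \<gamma> n = {t \<in> trees m n. twin_branch \<gamma> n t}"

end

theory Submission
  imports Defs
begin

inductive grafted :: "utree \<Rightarrow> utree \<Rightarrow> utree \<Rightarrow> bool" for s where
  g_root: "grafted s (Node M) (Node (M + {#s, s#}))"
| g_child: "c \<in># M \<Longrightarrow> grafted s c c' \<Longrightarrow> grafted s (Node M) (Node (M - {#c#} + {#c'#}))"

lemma sum_set_mset_le: "(\<Sum>x\<in>set_mset M. f x) \<le> sum_mset (image_mset f M)" for f :: "'a \<Rightarrow> nat"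
proof (induction M)
  case empty then show ?case by simp
next
  case (add x M)
  have "(\<Sum>x\<in>set_mset (add_mset x M). f x) \<le> f x + (\<Sum>x\<in>set_mset M. f x)"
    by (simp add: sum.insert_if)
  then show ?case using add by simp
qed

lemma grafted_set: "{t'. grafted s (Node M) t'} =
  insert (Node (M + {#s,s#})) (\<Union>c\<in>set_mset M. (\<lambda>c'. Node (M - {#c#} + {#c'#})) ` {c'. grafted s c c'})"
proof (rule set_eqI, rule iffI)
  fix t assume "t \<in> {t'. grafted s (Node M) t'}"
  then have "grafted s (Node M) t" by simp
  then show "t \<in> insert (Node (M + {#s,s#})) (\<Union>c\<in>set_mset M. (\<lambda>c'. Node (M - {#c#} + {#c'#})) ` {c'. grafted s c c'})"
    by (cases rule: grafted.cases) auto
next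
  fix t assume "t \<in> insert (Node (M + {#s,s#})) (\<Union>c\<in>set_mset M. (\<lambda>c'. Node (M - {#c#} + {#c'#})) ` {c'. grafted s c c'})"
  then show "t \<in> {t'. grafted s (Node M) t'}"
  proof
    assume "t = Node (M + {#s,s#})" then show ?thesis using g_root[of s M] by simp
  next
    assume "t \<in> (\<Union>c\<in>set_mset M. (\<lambda>c'. Node (M - {#c#} + {#c'#})) ` {c'. grafted s c c'})"
    then obtain c c' where "c \<in># M" "grafted s c c'" "t = Node (M - {#c#} + {#c'#})" by auto
    then show ?thesis using g_child[of c M s c'] by simp
  qed
qed

lemma graft_card: "finite {t'. grafted s t t'} \<and> card {t'. grafted s t t'} \<le> nverts t"
proof (induction t)
  case (Node M)
  let ?U = "\<Union>c\<in>set_mset M. (\<lambda>c'. Node (M - {#c#} + {#c'#})) ` {c'. grafted s c c'}"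
  have fin: "finite ?U" using Node by auto
  have "card ?U \<le> (\<Sum>c\<in>set_mset M. card ((\<lambda>c'. Node (M - {#c#} + {#c'#})) ` {c'. grafted s c c'}))"
    by (rule card_UN_le) simp
  also have "\<dots> \<le> (\<Sum>c\<in>set_mset M. nverts c)"
    apply (rule sum_mono)
    using Node by (meson card_image_le le_trans)
  also have "\<dots> \<le> sum_mset (image_mset nverts M)" by (rule sum_set_mset_le)
  finally have "card ?U \<le> sum_mset (image_mset nverts M)" .
  moreover have "card (insert (Node (M + {#s,s#})) ?U) \<le> Suc (card ?U)"
    using fin by (simp add: card_insert_if)
  ultimately show ?case unfolding grafted_set using fin by simp
qed

lemma outdeg_sub: "outdeg_le m t \<Longrightarrow> u \<in> subtrees t \<Longrightarrow> outdeg_le m u"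
  by (induction t) auto

lemma nverts_pos: "nverts t \<ge> 1"
  by (cases t) auto

lemma decomp: "Node M \<in> subtrees t \<Longrightarrow> count M s \<ge> 2 \<Longrightarrow>
  \<exists>t'. grafted s t' t \<and> nverts t' + 2 * nverts s = nverts t \<and> (outdeg_le m t \<longrightarrow> outdeg_le m t')"
proof (induction t)
  case (Node N)
  show ?case
  proof (cases "Node M = Node N")
    case True
    hence MN: "M = N" by simp
    have sub: "{#s,s#} \<subseteq># N" using Node.prems(2) MN
      unfolding subseteq_mset_def by auto
    have eq: "N - {#s,s#} + {#s,s#} = N" by (rule subset_mset.diff_add[OF sub])
    let ?t = "Node (N - {#s,s#})"
    have g: "grafted s ?t (Node N)" using g_root[of s "N - {#s,s#}"] eq by simp
    have "sum_mset (image_mset nverts N) = sum_mset (image_mset nverts (N - {#s,s#})) + 2 * nverts s"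
      by (subst (1) eq[symmetric]) simp
    moreover have "outdeg_le m (Node N) \<longrightarrow> outdeg_le m ?t"
    proof
      assume a: "outdeg_le m (Node N)"
      have "size (N - {#s,s#}) \<le> size N" by (rule size_mset_mono) simp
      hence "enat (size (N - {#s,s#})) \<le> m" using a by (meson a enat_ord_simps(1) order_trans outdeg_le.simps)
      moreover have "\<forall>x\<in>#N - {#s,s#}. outdeg_le m x" using a by (auto dest: in_diffD)
      ultimately show "outdeg_le m ?t" by simp
    qed
    ultimately show ?thesis using g by auto
  next
    case False
    then obtain c where c: "c \<in># N" "Node M \<in> subtrees c" using Node.prems by auto
    from Node.IH[OF c(1) c(2) Node.prems(2)] obtain c' where
      c': "grafted s c' c" "nverts c' + 2 * nverts s = nverts c" "outdeg_le m c \<longrightarrow> outdeg_le m c'" by blast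
    let ?t = "Node (N - {#c#} + {#c'#})"
    have "grafted s ?t (Node (N - {#c#} + {#c'#} - {#c'#} + {#c#}))"
      by (rule g_child) (auto simp: c')
    moreover have "N - {#c#} + {#c'#} - {#c'#} + {#c#} = N" using c(1) by simp
    ultimately have g: "grafted s ?t (Node N)" by simp
    have NN: "N = add_mset c (N - {#c#})" using c(1) by simp
    have "sum_mset (image_mset nverts N) = nverts c + sum_mset (image_mset nverts (N - {#c#}))"
      by (subst (1) NN) simp
    hence nv: "nverts ?t + 2 * nverts s = nverts (Node N)" using c'(2) by simp
    have "outdeg_le m (Node N) \<longrightarrow> outdeg_le m ?t"
    proof
      assume a: "outdeg_le m (Node N)"
      have "size (N - {#c#} + {#c'#}) = size N" by (subst (2) NN) simp
      moreover have "\<forall>x\<in>#N - {#c#}. outdeg_le m x" using a by (auto dest: in_diffD)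
      moreover have "outdeg_le m c'" using a c c'(3) by auto
      ultimately show "outdeg_le m ?t" using a by auto
    qed
    then show ?thesis using g nv by blast
  qed
qed

lemma size_le_nverts: "size M \<le> sum_mset (image_mset nverts M)"
proof (induction M)
  case (add x M) then show ?case using nverts_pos[of x] by simp
qed simp

lemma finite_bounded_msets: "finite A \<Longrightarrow> finite {M. set_mset M \<subseteq> A \<and> size M \<le> n}"
proof -
  assume "finite A"
  have "{M. set_mset M \<subseteq> A \<and> size M \<le> n} \<subseteq> mset ` {xs. set xs \<subseteq> A \<and> length xs \<le> n}"
  proof
    fix M assume "M \<in> {M. set_mset M \<subseteq> A \<and> size M \<le> n}"
    moreover obtain xs where "mset xs = M" using ex_mset by blast
    ultimately show "M \<in> mset ` {xs. set xs \<subseteq> A \<and> length xs \<le> n}" by auto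
  qed
  moreover have "finite (mset ` {xs. set xs \<subseteq> A \<and> length xs \<le> n})"
    using finite_lists_length_le[OF \<open>finite A\<close>] by simp
  ultimately show ?thesis by (rule finite_subset)
qed

lemma finite_nverts: "finite {t. nverts t \<le> n}"
proof (induction n)
  case 0
  have "{t. nverts t \<le> 0} = {}"
  proof (rule equals0I)
    fix t assume "t \<in> {t. nverts t \<le> 0}"
    with nverts_pos[of t] show False by simp
  qed
  then show ?case by (simp only: finite.emptyI)
next
  case (Suc n)
  have "{t. nverts t \<le> Suc n} \<subseteq> Node ` {M. set_mset M \<subseteq> {t. nverts t \<le> n} \<and> size M \<le> n}"
  proof
    fix t assume "t \<in> {t. nverts t \<le> Suc n}"
    then obtain M where t: "t = Node M" "sum_mset (image_mset nverts M) \<le> n" by (cases t) auto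
    have "set_mset M \<subseteq> {t. nverts t \<le> n}"
    proof
      fix c assume "c \<in># M"
      hence MM: "M = add_mset c (M - {#c#})" by simp
      have "sum_mset (image_mset nverts M) = nverts c + sum_mset (image_mset nverts (M - {#c#}))"
        by (subst (1) MM) simp
      hence "nverts c \<le> sum_mset (image_mset nverts M)" by simp
      thus "c \<in> {t. nverts t \<le> n}" using t by simp
    qed
    moreover have "size M \<le> n" using size_le_nverts[of M] t by simp
    ultimately show "t \<in> Node ` {M. set_mset M \<subseteq> {t. nverts t \<le> n} \<and> size M \<le> n}" using t by auto
  qed
  moreover have "finite (Node ` {M. set_mset M \<subseteq> {t. nverts t \<le> n} \<and> size M \<le> n})"
    using finite_bounded_msets[OF Suc] by simp
  ultimately show ?case by (rule finite_subset)
qed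

lemma finite_trees: "finite (trees m n)"
  unfolding trees_def by (rule finite_subset[OF _ finite_nverts[of n]]) auto

lemma card_UN_le_const:
  assumes "finite I" "\<And>i. i \<in> I \<Longrightarrow> card (A i) \<le> c"
  shows "card (\<Union>i\<in>I. A i) \<le> card I * c"
proof -
  have "card (\<Union>i\<in>I. A i) \<le> (\<Sum>i\<in>I. card (A i))" by (rule card_UN_le[OF assms(1)])
  also have "\<dots> \<le> (\<Sum>i\<in>I. c)" by (rule sum_mono) (rule assms(2))
  finally show ?thesis by simp
qed

definition Kset :: "real \<Rightarrow> nat \<Rightarrow> nat set" where
  "Kset \<gamma> n = {k\<in>{..n}. real n powr \<gamma> \<le> real k \<and> 2*k \<le> n}"

lemma count_A:
  "card (A_set m \<gamma> n) \<le> (\<Sum>k\<in>Kset \<gamma> n. card (trees m k) * (card (trees m (n-2*k)) * n))"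
proof -
  let ?U = "\<Union>k\<in>Kset \<gamma> n. \<Union>s\<in>trees m k. \<Union>t'\<in>trees m (n-2*k). {t. grafted s t' t}"
  have finK: "finite (Kset \<gamma> n)" unfolding Kset_def by simp
  have sub: "A_set m \<gamma> n \<subseteq> ?U"
  proof
    fix t assume "t \<in> A_set m \<gamma> n"
    hence t: "outdeg_le m t" "nverts t = n" "twin_branch \<gamma> n t"
      unfolding A_set_def trees_def by auto
    then obtain M s where Ms: "Node M \<in> subtrees t" "count M s \<ge> 2" "real (nverts s) \<ge> real n powr \<gamma>"
      unfolding twin_branch_def by blast
    from decomp[OF Ms(1) Ms(2), of m] obtain t' where
      t': "grafted s t' t" "nverts t' + 2 * nverts s = nverts t" "outdeg_le m t \<longrightarrow> outdeg_le m t'" by blast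
    have "outdeg_le m (Node M)" using outdeg_sub[OF t(1) Ms(1)] .
    moreover have "s \<in># M" using Ms(2) by (metis count_inI not_numeral_le_zero)
    ultimately have os: "outdeg_le m s" by simp
    have kK: "nverts s \<in> Kset \<gamma> n" unfolding Kset_def using t'(2) t(2) Ms(3) by auto
    have sT: "s \<in> trees m (nverts s)" using os unfolding trees_def by simp
    have tT: "t' \<in> trees m (n - 2 * nverts s)" using t' t unfolding trees_def by auto
    show "t \<in> ?U"
      by (rule UN_I[OF kK], rule UN_I[OF sT], rule UN_I[OF tT]) (simp add: t'(1))
  qed
  have finU: "finite ?U" by (intro finite_UN_I finK finite_trees) (simp add: graft_card)
  have "card (A_set m \<gamma> n) \<le> card ?U" by (rule card_mono[OF finU sub])
  also have "card ?U \<le> (\<Sum>k\<in>Kset \<gamma> n. card (\<Union>s\<in>trees m k. \<Union>t'\<in>trees m (n-2*k). {t. grafted s t' t}))"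
    by (rule card_UN_le[OF finK])
  also have "\<dots> \<le> (\<Sum>k\<in>Kset \<gamma> n. card (trees m k) * (card (trees m (n-2*k)) * n))"
  proof (rule sum_mono)
    fix k assume "k \<in> Kset \<gamma> n"
    show "card (\<Union>s\<in>trees m k. \<Union>t'\<in>trees m (n-2*k). {t. grafted s t' t}) \<le> card (trees m k) * (card (trees m (n-2*k)) * n)"
    proof (rule card_UN_le_const[OF finite_trees])
      fix s assume "s \<in> trees m k"
      show "card (\<Union>t'\<in>trees m (n-2*k). {t. grafted s t' t}) \<le> card (trees m (n-2*k)) * n"
      proof (rule card_UN_le_const[OF finite_trees])
        fix t' assume "t' \<in> trees m (n-2*k)"
        hence "nverts t' \<le> n" unfolding trees_def by simp
        thus "card {t. grafted s t' t} \<le> n" using graft_card[of s t'] by linarith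
      qed
    qed
  qed
  finally show ?thesis .
qed

lemma geom_bound:
  fixes r :: real
  assumes r: "0 \<le> r" "r < 1" and K: "finite K" "\<And>k. k \<in> K \<Longrightarrow> k0 \<le> k"
  shows "(\<Sum>k\<in>K. r^k) \<le> r^k0 / (1 - r)"
proof -
  let ?J = "(\<lambda>k. k - k0) ` K"
  have inj: "inj_on (\<lambda>k. k - k0) K" using K(2) by (intro inj_onI) (metis le_add_diff_inverse)
  have "(\<Sum>k\<in>K. r^k) = (\<Sum>j\<in>?J. r^(j + k0))"
    by (subst sum.reindex[OF inj]) (auto intro!: sum.cong simp: K(2))
  also have "\<dots> \<le> (\<Sum>j. r^(j + k0))"
  proof (rule sum_le_suminf)
    show "summable (\<lambda>j. r^(j + k0))"
      using summable_geometric[of r] r by (simp add: power_add summable_mult2)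
  qed (use K r in auto)
  also have "(\<Sum>j. r^(j + k0)) = (\<Sum>j. r^j) * r^k0"
    by (simp add: power_add suminf_mult2[symmetric] summable_geometric r)
  also have "\<dots> = r^k0 / (1 - r)" using r by (simp add: suminf_geometric)
  finally show ?thesis .
qed


theorem lemma24:
  fixes m :: enat and \<gamma> \<kappa> \<rho> :: real
  assumes "m \<ge> 2" and "0 < \<gamma>" and "\<gamma> < 1"
    and "\<kappa> > 0" and "\<rho> > 1"
    and "(\<lambda>n. real (card (trees m n))) \<sim>[at_top] (\<lambda>n. \<kappa> * \<rho> ^ n * real n powr (-3/2))"
  shows "(\<lambda>n. real (card (A_set m \<gamma> n)) / real (card (trees m n)))
           \<in> O[at_top](\<lambda>n. \<rho> powr (- (real n powr \<gamma>)) * real n powr (5/2))"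
proof -
  define T where "T j = real (card (trees m j))" for j
  define g where "g j = \<kappa> * \<rho> ^ j * real j powr (-3/2)" for j :: nat
  have kp: "\<kappa> > 0" and rp: "\<rho> > 1" by fact+
  have gpos: "g j > 0" if "j \<ge> 1" for j using that kp rp unfolding g_def by simp
  have lim: "((\<lambda>n. T n / g n) \<longlongrightarrow> 1) at_top"
  proof (rule asymp_equivD_strong)
    show "T \<sim>[at_top] g" using assms(6) unfolding T_def g_def by simp
    show "\<forall>\<^sub>F x in at_top. T x \<noteq> 0 \<or> g x \<noteq> 0"
      using eventually_ge_at_top[of "1::nat"] by eventually_elim (use gpos in force)
  qed
  have ev: "\<forall>\<^sub>F n in at_top. 1/2 < T n / g n \<and> T n / g n < 2 \<and> n \<ge> 1"
  proof -
    have e1: "\<forall>\<^sub>F n in at_top. 1/2 < T n / g n" by (rule order_tendstoD(1)[OF lim]) simp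
    have e2: "\<forall>\<^sub>F n in at_top. T n / g n < 2" by (rule order_tendstoD(2)[OF lim]) simp
    show ?thesis using e1 e2 eventually_ge_at_top[of "1::nat"] by eventually_elim auto
  qed
  then obtain N where N: "\<And>n. n \<ge> N \<Longrightarrow> 1/2 < T n / g n \<and> T n / g n < 2 \<and> n \<ge> 1"
    unfolding eventually_at_top_linorder by blast
  have lowT: "T n \<ge> g n / 2" if "n \<ge> N" for n
  proof -
    have "g n > 0" using N[OF that] gpos by simp
    thus ?thesis using N[OF that] by (simp add: field_simps)
  qed
  have upT: "T n \<le> 2 * \<kappa> * \<rho> ^ n" if "n \<ge> N" for n
  proof -
    have gp: "g n > 0" using N[OF that] gpos by simp
    hence "T n \<le> 2 * g n" using N[OF that] by (simp add: field_simps)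
    moreover have "real n powr (-3/2) \<le> 1"
      using N[OF that] by (simp add: powr_minus divide_simps ge_one_powr_ge_zero)
    hence "g n \<le> \<kappa> * \<rho> ^ n" unfolding g_def using kp rp by (simp add: mult_left_le)
    ultimately show ?thesis by simp
  qed
  define C where "C = 2 * \<kappa> + (\<Sum>i<N. T i)"
  have Tnn: "T j \<ge> 0" for j unfolding T_def by simp
  have Cpos: "C > 0" unfolding C_def using kp Tnn by (simp add: sum_nonneg add_pos_nonneg)
  have Cb: "T j \<le> C * \<rho> ^ j" for j
  proof (cases "j \<ge> N")
    case True
    have "2 * \<kappa> \<le> C" unfolding C_def using Tnn by (simp add: sum_nonneg)
    hence "2 * \<kappa> * \<rho> ^ j \<le> C * \<rho> ^ j" using rp by (simp add: mult_right_mono)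
    thus ?thesis using upT[OF True] by simp
  next
    case False
    have "T j \<le> (\<Sum>i<N. T i)" using False Tnn by (intro member_le_sum) auto
    also have "\<dots> \<le> C" unfolding C_def using kp by simp
    also have "C \<le> C * \<rho> ^ j" using Cpos rp by simp
    finally show ?thesis .
  qed
  define c where "c = 2 * C^2 * \<rho> / (\<kappa> * (\<rho> - 1))"
  show ?thesis
  proof (rule bigoI[where c = c])
    show "\<forall>\<^sub>F n in at_top. norm (real (card (A_set m \<gamma> n)) / real (card (trees m n)))
            \<le> c * norm (\<rho> powr (- (real n powr \<gamma>)) * real n powr (5/2))"
      using eventually_ge_at_top[of N]
    proof eventually_elim
      case (elim n)
      have n1: "n \<ge> 1" using N[OF elim] by simp
      define x where "x = real n powr \<gamma>"
      define k0 where "k0 = nat \<lceil>x\<rceil>"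
      let ?K = "Kset \<gamma> n"
      let ?a = "real (card (A_set m \<gamma> n))"
      have "?a \<le> (\<Sum>k\<in>?K. T k * (T (n-2*k) * real n))"
        using count_A[of m \<gamma> n] unfolding T_def by (simp flip: of_nat_mult of_nat_sum)
      also have "\<dots> \<le> (\<Sum>k\<in>?K. (C * \<rho>^k) * ((C * \<rho>^(n-2*k)) * real n))"
        by (intro sum_mono mult_mono Cb mult_nonneg_nonneg Tnn) (use Cpos rp in auto)
      also have "\<dots> = C^2 * real n * \<rho>^n * (\<Sum>k\<in>?K. (1/\<rho>)^k)"
      proof -
        have stp: "(C * \<rho>^k) * ((C * \<rho>^(n-2*k)) * real n) = C^2 * real n * \<rho>^n * (1/\<rho>)^k"
          if "k \<in> ?K" for k
        proof -
          have "2*k \<le> n" using that unfolding Kset_def by simp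
          hence "\<rho>^n = \<rho>^(n-2*k) * \<rho>^k * \<rho>^k"
            by (metis add.commute le_add_diff_inverse mult_2 power_add mult.assoc)
          thus ?thesis using rp by (simp add: power_one_over field_simps power2_eq_square)
        qed
        have "(\<Sum>k\<in>?K. (C * \<rho>^k) * ((C * \<rho>^(n-2*k)) * real n)) = (\<Sum>k\<in>?K. C^2 * real n * \<rho>^n * (1/\<rho>)^k)"
          by (rule sum.cong[OF refl]) (rule stp)
        thus ?thesis by (simp only: sum_distrib_left)
      qed
      also have "(\<Sum>k\<in>?K. (1/\<rho>)^k) \<le> (1/\<rho>)^k0 / (1 - 1/\<rho>)"
      proof (rule geom_bound)
        show "finite ?K" unfolding Kset_def by simp
        fix k assume "k \<in> ?K"
        hence "x \<le> real k" unfolding Kset_def x_def by simp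
        thus "k0 \<le> k" unfolding k0_def by (simp add: nat_le_iff ceiling_le)
      qed (use rp in auto)
      also have "(1/\<rho>)^k0 \<le> \<rho> powr (-x)"
      proof -
        have "(1/\<rho>)^k0 = \<rho> powr (- real k0)" using rp
          by (simp add: powr_minus powr_realpow power_one_over inverse_eq_divide)
        also have "\<dots> \<le> \<rho> powr (-x)" unfolding k0_def using rp
          by (intro powr_mono) (auto simp: real_nat_ceiling_ge)
        finally show ?thesis .
      qed
      finally have abound: "?a \<le> C^2 * real n * \<rho>^n * (\<rho> powr (-x) / (1 - 1/\<rho>))"
        using Cpos rp n1 by (auto simp: mult_left_mono divide_right_mono)
      have gp: "g n > 0" using gpos n1 by simp
      define D where "D = g n / 2"
      have Dp: "D > 0" unfolding D_def using gp by simp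
      have DT: "D \<le> T n" unfolding D_def using lowT[OF elim] .
      have ann: "?a \<ge> 0" by simp
      define B where "B = C^2 * real n * \<rho>^n * (\<rho> powr (-x) / (1 - 1/\<rho>))"
      have "?a / T n \<le> ?a / D" by (rule divide_left_mono[OF DT ann]) (use Dp DT in auto)
      also have "\<dots> \<le> B / D" unfolding B_def by (rule divide_right_mono[OF abound]) (use Dp in simp)
      also have "B / D = c * (\<rho> powr (-x) * real n powr (5/2))"
      proof -
        have p: "real n powr (5/2) * real n powr (-3/2) = real n"
          using n1 by (simp add: powr_add[symmetric])
        have np: "real n powr (-3/2) > 0" using n1 by simp
        have r1: "1 - 1/\<rho> = (\<rho> - 1)/\<rho>" using rp by (simp add: field_simps)
        show ?thesis unfolding B_def D_def g_def c_def r1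
          using rp kp np p by (simp add: field_simps power2_eq_square)
      qed
      finally have fin: "?a / T n \<le> c * (\<rho> powr (-x) * real n powr (5/2))" .
      have "norm (?a / T n) = ?a / T n" using Tnn by simp
      moreover have "norm (\<rho> powr (- (real n powr \<gamma>)) * real n powr (5/2)) = \<rho> powr (-x) * real n powr (5/2)"
        unfolding x_def by simp
      ultimately show ?case using fin unfolding T_def x_def by simp
    qed
  qed
qed

end
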